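(* A finite-dimensional right $D(S_3)$-module $V$ is inner faithful if and only if $V_6$ or $V_7$ (defined in the context) is isomorphic to a direct summand of $V$.
   Context: Let $\Bbbk=\mathbb{C}$, $\zeta$ a primitive cube root of unity, and $S_3=\langle r,s\mid r^3=s^2=e,\ srs^{-1}=r^{-1}\rangle$. The Drinfeld double $D(G)$ of a finite group $G$ has basis $\{\phi_gh\}$, multiplication $(\phi_g h)(\phi_{g'}h')=\delta_{g,hg'h^{-1}}\phi_g hh'$, comultiplication $\Delta(\phi_gh)=\sum_x\phi_xh\otimes\phi_{x^{-1}g}h$, counit $\epsilon(\phi_gh)=\delta_{g,e}$; it is semisimple over $\mathbb{C}$. A right $D(G)$-module is a $G$-graded vector space $V=\bigoplus_xV_x$ with a right $G$-action such that $V_x\cdot g\subseteq V_{g^{-1}xg}$ ($\phi_x$ acts as projection onto $V_x$); in $V\otimes W$, $V_x\otimes W_y$ has grade $xy$ and $G$ acts diagonally. A module $V$ over a Hopf algebra $H$ is inner faithful if no nonzero Hopf ideal $I$ of $H$ satisfies $VI=0$. The following eight modules form a complete list of pairwise non-isomorphic simple right $D(S_3)$-modules: $V_0$: $u$, grade $e$, $u\cdot r=u$, $u\cdot s=u$. $V_1$: $u$, grade $e$, $u\cdot r=u$, $u\cdot s=-u$. $V_2$: $u,v$ of grade $e$, $u\cdot r=\zeta u$, $u\cdot s=v$, $v\cdot r=\zeta^2v$, $v\cdot s=u$. $V_{3+k}$ for $k=0,1,2$: $u$ of grade $r$, $v$ of grade $r^2$, $u\cdot r=\zeta^ku$, $u\cdot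 s=v$, $v\cdot r=\zeta^{2k}v$, $v\cdot s=u$. $V_6$: $u,v,p$ of grades $s,sr,sr^2$, with $u\cdot r=p$, $v\cdot r=u$, $p\cdot r=v$, $u\cdot s=u$, $v\cdot s=p$, $p\cdot s=v$. $V_7$: same grades and $r$-action as $V_6$, with $u\cdot s=-u$, $v\cdot s=-p$, $p\cdot s=-v$. *)

theory Defs
  imports Complex_Main "Jordan_Normal_Form.Matrix"
begin

text \<open>Elements written in normal form s^j r^i: E = e, R = r, R2 = r^2,
  S = s, SR = s r, SR2 = s r^2.\<close>
datatype s3 = E | R | R2 | S | SR | SR2

instance s3 :: finite
proof
  have "(UNIV :: s3 set) = {E, R, R2, S, SR, SR2}"
    by (auto intro: s3.exhaust)
  moreover have "finite {E, R, R2, S, SR, SR2}" by simp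
  ultimately show "finite (UNIV :: s3 set)" by metis
qed

fun sexp :: "s3 \<Rightarrow> nat" where
  "sexp E = 0" | "sexp R = 0" | "sexp R2 = 0"
| "sexp S = 1" | "sexp SR = 1" | "sexp SR2 = 1"

fun rexp :: "s3 \<Rightarrow> nat" where
  "rexp E = 0" | "rexp R = 1" | "rexp R2 = 2"
| "rexp S = 0" | "rexp SR = 1" | "rexp SR2 = 2"

definition of_exps :: "nat \<Rightarrow> nat \<Rightarrow> s3" where
  "of_exps j i = (if j mod 2 = 0
     then (if i mod 3 = 0 then E else if i mod 3 = 1 then R else R2)
     else (if i mod 3 = 0 then S else if i mod 3 = 1 then SR else SR2))"

text \<open>(s^j r^i)(s^j' r^i') = s^(j+j') r^((-1)^j' i + i'), using r s = s r^(-1).\<close>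
definition s3_mult :: "s3 \<Rightarrow> s3 \<Rightarrow> s3" where
  "s3_mult x y = of_exps (sexp x + sexp y)
     ((if sexp y = 0 then rexp x else 3 - rexp x) + rexp y)"

fun s3_inv :: "s3 \<Rightarrow> s3" where
  "s3_inv E = E" | "s3_inv R = R2" | "s3_inv R2 = R"
| "s3_inv S = S" | "s3_inv SR = SR" | "s3_inv SR2 = SR2"

text \<open>An element of D(S3) is its coefficient vector w.r.t. the basis phi_g h,
  the coefficient of phi_g h being stored at (g,h).\<close>
type_synonym dS3 = "s3 \<times> s3 \<Rightarrow> complex"

text \<open>Elements of D(S3) (x) D(S3), coefficients w.r.t. basis (phi_g h) (x) (phi_g' h').\<close>
type_synonym dS3_tens = "(s3 \<times> s3) \<times> (s3 \<times> s3) \<Rightarrow> complex"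

definition basis_elt :: "s3 \<Rightarrow> s3 \<Rightarrow> dS3" where
  "basis_elt g h = (\<lambda>p. if p = (g, h) then 1 else 0)"

definition d_add :: "dS3 \<Rightarrow> dS3 \<Rightarrow> dS3" where
  "d_add a b = (\<lambda>p. a p + b p)"

definition d_scale :: "complex \<Rightarrow> dS3 \<Rightarrow> dS3" where
  "d_scale c a = (\<lambda>p. c * a p)"

text \<open>(phi_g h)(phi_g' h') = delta(g, h g' h^-1) phi_g (h h'), extended bilinearly.\<close>
definition d_mult :: "dS3 \<Rightarrow> dS3 \<Rightarrow> dS3" where
  "d_mult a b = (\<lambda>(g0, k0). \<Sum>(g, h)\<in>UNIV. \<Sum>(g', h')\<in>UNIV.
      if g = s3_mult (s3_mult h g') (s3_inv h) \<and> g0 = g \<and> k0 = s3_mult h h'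
      then a (g, h) * b (g', h') else 0)"

definition d_unit :: dS3 where
  "d_unit = (\<lambda>(g, h). if h = E then 1 else 0)"

text \<open>Delta(phi_g h) = sum_x phi_x h (x) phi_(x^-1 g) h, extended linearly.\<close>
definition d_comult :: "dS3 \<Rightarrow> dS3_tens" where
  "d_comult a = (\<lambda>((g1, h1), (g2, h2)). \<Sum>(g, h)\<in>UNIV.
      if h1 = h \<and> h2 = h \<and> g2 = s3_mult (s3_inv g1) g then a (g, h) else 0)"

definition d_counit :: "dS3 \<Rightarrow> complex" where
  "d_counit a = (\<Sum>(g, h)\<in>UNIV. if g = E then a (g, h) else 0)"

text \<open>Standard antipode of D(G): S(phi_g h) = h^-1 phi_(g^-1) = phi_(h^-1 g^-1 h) h^-1.\<close>
definition d_antipode :: "dS3 \<Rightarrow> dS3" where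
  "d_antipode a = (\<lambda>(g', h'). \<Sum>(g, h)\<in>UNIV.
      if g' = s3_mult (s3_mult (s3_inv h) (s3_inv g)) h \<and> h' = s3_inv h
      then a (g, h) else 0)"

text \<open>I (x) H + H (x) I: all finite sums of pure tensors a (x) b with a in I or b in I.\<close>
inductive_set tens_sum :: "dS3 set \<Rightarrow> dS3_tens set" for I :: "dS3 set" where
  zero: "(\<lambda>_. 0) \<in> tens_sum I"
| left: "a \<in> I \<Longrightarrow> y \<in> tens_sum I \<Longrightarrow> (\<lambda>(p, q). a p * b q + y (p, q)) \<in> tens_sum I"
| right: "b \<in> I \<Longrightarrow> y \<in> tens_sum I \<Longrightarrow> (\<lambda>(p, q). a p * b q + y (p, q)) \<in> tens_sum I"

definition subspace_d :: "dS3 set \<Rightarrow> bool" where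
  "subspace_d I \<longleftrightarrow> (\<lambda>_. 0) \<in> I \<and> (\<forall>a\<in>I. \<forall>b\<in>I. d_add a b \<in> I)
     \<and> (\<forall>c. \<forall>a\<in>I. d_scale c a \<in> I)"

definition hopf_ideal :: "dS3 set \<Rightarrow> bool" where
  "hopf_ideal I \<longleftrightarrow> subspace_d I
     \<and> (\<forall>a\<in>I. \<forall>b. d_mult a b \<in> I \<and> d_mult b a \<in> I)
     \<and> (\<forall>a\<in>I. d_comult a \<in> tens_sum I)
     \<and> (\<forall>a\<in>I. d_counit a = 0)
     \<and> (\<forall>a\<in>I. d_antipode a \<in> I)"

text \<open>A right D(S3)-module of dimension n: V = C^n (row vectors), v . a = v * act a.
  The right-module axioms (v.(ab) = (v.a).b, v.1 = v, linearity) amount to act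
  being a unital algebra map into n x n matrices.\<close>
definition rmod :: "nat \<Rightarrow> (dS3 \<Rightarrow> complex mat) \<Rightarrow> bool" where
  "rmod n act \<longleftrightarrow> (\<forall>a. act a \<in> carrier_mat n n)
     \<and> (\<forall>a b. act (d_add a b) = act a + act b)
     \<and> (\<forall>c a. act (d_scale c a) = c \<cdot>\<^sub>m act a)
     \<and> (\<forall>a b. act (d_mult a b) = act a * act b)
     \<and> act d_unit = 1\<^sub>m n"

definition inner_faithful :: "nat \<Rightarrow> (dS3 \<Rightarrow> complex mat) \<Rightarrow> bool" where
  "inner_faithful n act \<longleftrightarrow>
     \<not> (\<exists>I. hopf_ideal I \<and> I \<noteq> {\<lambda>_. 0} \<and> (\<forall>a\<in>I. act a = 0\<^sub>m n n))"

text \<open>Module (m, actW) is isomorphic to a direct summand of (n, actV): there are module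
  maps F : W -> V (w |-> w * F) and P : V -> W (v |-> v * P) with P o F = id_W.\<close>
definition iso_to_summand :: "nat \<Rightarrow> (dS3 \<Rightarrow> complex mat) \<Rightarrow> nat \<Rightarrow> (dS3 \<Rightarrow> complex mat) \<Rightarrow> bool" where
  "iso_to_summand m actW n actV \<longleftrightarrow> (\<exists>F P. F \<in> carrier_mat m n \<and> P \<in> carrier_mat n m
     \<and> (\<forall>a. actW a * F = F * actV a) \<and> (\<forall>a. actV a * P = P * actW a)
     \<and> F * P = 1\<^sub>m m)"

text \<open>Module from a grading of the basis vectors and right G-action matrices T
  (row i of T h is the image of the i-th basis vector under h):
  v . (phi_g h) = (proj_g v) . h.\<close>
definition graded_act :: "nat \<Rightarrow> (nat \<Rightarrow> s3) \<Rightarrow> (s3 \<Rightarrow> complex mat) \<Rightarrow> dS3 \<Rightarrow> complex mat" where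
  "graded_act n grade T a = mat n n (\<lambda>(i, j). \<Sum>h\<in>UNIV. a (grade i, h) * (T h $$ (i, j)))"

text \<open>V6, V7: basis u, v, p (indices 0,1,2) of grades s, sr, sr^2.\<close>
fun grade67 :: "nat \<Rightarrow> s3" where
  "grade67 0 = S" | "grade67 (Suc 0) = SR" | "grade67 _ = SR2"

definition Tr67 :: "complex mat" where
  "Tr67 = mat_of_rows_list 3 [[0, 0, 1], [1, 0, 0], [0, 1, 0]]"

definition Ts6 :: "complex mat" where
  "Ts6 = mat_of_rows_list 3 [[1, 0, 0], [0, 0, 1], [0, 1, 0]]"

definition Ts7 :: "complex mat" where
  "Ts7 = mat_of_rows_list 3 [[-1, 0, 0], [0, 0, -1], [0, -1, 0]]"

definition V6 :: "dS3 \<Rightarrow> complex mat" where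
  "V6 = graded_act 3 grade67 (\<lambda>g. (Ts6 ^\<^sub>m sexp g) * (Tr67 ^\<^sub>m rexp g))"

definition V7 :: "dS3 \<Rightarrow> complex mat" where
  "V7 = graded_act 3 grade67 (\<lambda>g. (Ts7 ^\<^sub>m sexp g) * (Tr67 ^\<^sub>m rexp g))"

end

theory Submission
  imports Defs
begin

lemma UNIV_s3: "(UNIV :: s3 set) = {E, R, R2, S, SR, SR2}"
  by (auto intro: s3.exhaust)

lemma sum_s3: "(\<Sum>h\<in>UNIV. f h) = f E + f R + f R2 + f S + f SR + f SR2"
  by (simp add: UNIV_s3 add.assoc)

lemma mult_simps[simp]:
  "s3_mult E x = x" "s3_mult x E = x"
  by (cases x; simp add: s3_mult_def of_exps_def)+

lemma mult_tab[simp]: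
  "s3_mult R R = R2" "s3_mult R R2 = E" "s3_mult R S = SR2" "s3_mult R SR = S" "s3_mult R SR2 = SR"
  "s3_mult R2 R = E" "s3_mult R2 R2 = R" "s3_mult R2 S = SR" "s3_mult R2 SR = SR2" "s3_mult R2 SR2 = S"
  "s3_mult S R = SR" "s3_mult S R2 = SR2" "s3_mult S S = E" "s3_mult S SR = R" "s3_mult S SR2 = R2"
  "s3_mult SR R = SR2" "s3_mult SR R2 = S" "s3_mult SR S = R2" "s3_mult SR SR = E" "s3_mult SR SR2 = R"
  "s3_mult SR2 R = S" "s3_mult SR2 R2 = SR" "s3_mult SR2 S = R" "s3_mult SR2 SR = R2" "s3_mult SR2 SR2 = E"
  by (simp_all add: s3_mult_def of_exps_def)

lemma s3_assoc: "s3_mult (s3_mult x y) z = s3_mult x (s3_mult y z)"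
  by (cases x; cases y; cases z; simp)

lemma s3_inv_l[simp]: "s3_mult (s3_inv x) x = E" and s3_inv_r[simp]: "s3_mult x (s3_inv x) = E"
  by (cases x; simp)+

lemma conj_iff: "(g = s3_mult (s3_mult h g') (s3_inv h)) \<longleftrightarrow> (g' = s3_mult (s3_mult (s3_inv h) g) h)"
  by (cases g; cases h; cases g'; simp)

lemma mult_left_iff: "(k0 = s3_mult h h') \<longleftrightarrow> (h' = s3_mult (s3_inv h) k0)"
  by (cases k0; cases h; cases h'; simp)

lemma sum_if_out: "(\<Sum>x\<in>A. if P then f x else 0) = (if P then (\<Sum>x\<in>A. f x) else 0)" by simp

lemma ifc: "(if A \<and> B then x else 0) = (if A then (if B then x else 0) else 0)" by simp

lemma d_mult_eq: "d_mult a b (g0, k0) =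
   (\<Sum>h\<in>UNIV. a (g0, h) * b (s3_mult (s3_mult (s3_inv h) g0) h, s3_mult (s3_inv h) k0))"
proof -
  have c: "\<And>x h xa h'. (x = s3_mult (s3_mult h xa) (s3_inv h) \<and> g0 = x \<and> k0 = s3_mult h h') = (x = g0 \<and> xa = s3_mult (s3_mult (s3_inv h) g0) h \<and> h' = s3_mult (s3_inv h) k0)"
    using conj_iff mult_left_iff by blast
  have "d_mult a b (g0, k0) = (\<Sum>g\<in>UNIV. \<Sum>h\<in>UNIV. \<Sum>g'\<in>UNIV. \<Sum>h'\<in>UNIV.
      if g = g0 then (if g' = s3_mult (s3_mult (s3_inv h) g0) h then (if h' = s3_mult (s3_inv h) k0
      then a (g, h) * b (g', h') else 0) else 0) else 0)"
    unfolding d_mult_def UNIV_Times_UNIV[symmetric] sum.cartesian_product[symmetric]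
    apply (simp only: case_prod_conv)
    apply (intro sum.cong refl)
    apply (subst c)
    apply (simp only: ifc)
    done
  also have "\<dots> = (\<Sum>h\<in>UNIV. a (g0, h) * b (s3_mult (s3_mult (s3_inv h) g0) h, s3_mult (s3_inv h) k0))"
    by (simp only: sum_if_out sum.delta sum.delta' UNIV_I if_True finite_class.finite_UNIV)
  finally show ?thesis .
qed

lemma d_comult_eq: "d_comult a ((g1, h1), (g2, h2)) = (if h1 = h2 then a (s3_mult g1 g2, h1) else 0)"
proof -
  have i: "\<And>g. (g2 = s3_mult (s3_inv g1) g) \<longleftrightarrow> (g = s3_mult g1 g2)"
    by (cases g1; cases g2; case_tac g; simp)
  have c: "\<And>g h. (h1 = h \<and> h2 = h \<and> g2 = s3_mult (s3_inv g1) g) = (g = s3_mult g1 g2 \<and> h = h1 \<and> h2 = h1)"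
    using i by blast
  have "d_comult a ((g1, h1), (g2, h2)) = (\<Sum>g\<in>UNIV. \<Sum>h\<in>UNIV.
      if g = s3_mult g1 g2 then (if h = h1 then (if h2 = h1 then a (g, h) else 0) else 0) else 0)"
    unfolding d_comult_def UNIV_Times_UNIV[symmetric] sum.cartesian_product[symmetric]
    apply (simp only: case_prod_conv)
    apply (intro sum.cong refl)
    apply (subst c)
    apply (simp only: ifc)
    done
  also have "\<dots> = (if h1 = h2 then a (s3_mult g1 g2, h1) else 0)"
    by (simp only: sum_if_out sum.delta sum.delta' UNIV_I if_True finite_class.finite_UNIV) auto
  finally show ?thesis .
qed

definition kills :: "dS3 set \<Rightarrow> ('i \<Rightarrow> s3) \<Rightarrow> (s3 \<Rightarrow> 'i \<Rightarrow> 'i \<Rightarrow> complex) \<Rightarrow> 'i set \<Rightarrow> bool" where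
  "kills I gr T A \<longleftrightarrow> (\<forall>a\<in>I. \<forall>i\<in>A. \<forall>j\<in>A. (\<Sum>h\<in>UNIV. a (gr i, h) * T h i j) = 0)"

lemma sum_pair_sel: fixes b :: "s3 \<times> s3 \<Rightarrow> complex" shows "(\<Sum>p\<in>UNIV. b p * (if fst p = g0 then t (snd p) else 0)) = (\<Sum>h\<in>UNIV. b (g0, h) * t h)"
proof -
  have "(\<Sum>p\<in>UNIV. b p * (if fst p = g0 then t (snd p) else 0))
      = (\<Sum>g\<in>UNIV. \<Sum>h\<in>UNIV. if g = g0 then b (g, h) * t h else 0)"
    unfolding UNIV_Times_UNIV[symmetric] sum.cartesian_product
    by (rule sum.cong) (auto split: prod.split simp: mult_zero_right)
  also have "\<dots> = (\<Sum>h\<in>UNIV. b (g0, h) * t h)"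
    by (simp only: sum_if_out sum.delta sum.delta' UNIV_I if_True finite_class.finite_UNIV)
  finally show ?thesis .
qed

lemma sum_pair_sel2: fixes c :: "s3 \<Rightarrow> complex" and h0 :: s3
  shows "(\<Sum>q\<in>UNIV. (if h0 = snd q then c (fst q) else 0) * (if fst q = g0 then t (snd q) else 0)) = c g0 * t h0"
proof -
  have "(\<Sum>q\<in>UNIV. (if h0 = snd q then c (fst q) else 0) * (if fst q = g0 then t (snd q) else 0))
      = (\<Sum>g\<in>UNIV. \<Sum>h\<in>UNIV. if g = g0 then (if h = h0 then c g * t h else 0) else 0)"
    unfolding UNIV_Times_UNIV[symmetric] sum.cartesian_product
    by (rule sum.cong) (auto split: prod.split)
  also have "\<dots> = c g0 * t h0"
    by (simp only: sum_if_out sum.delta sum.delta' UNIV_I if_True finite_class.finite_UNIV)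
  finally show ?thesis .
qed

lemma kills_tensor0:
  assumes com: "\<forall>a\<in>I. d_comult a \<in> tens_sum I"
    and k1: "kills I gr1 T1 A" and k2: "kills I gr2 T2 B"
    and aI: "a \<in> I" and ii: "i \<in> A" "i' \<in> B" "j \<in> A" "j' \<in> B"
  shows "(\<Sum>h\<in>UNIV. a (s3_mult (gr1 i) (gr2 i'), h) * (T1 h i j * T2 h i' j')) = 0"
proof -
  define f where "f p = (if fst p = gr1 i then T1 (snd p) i j else 0)" for p :: "s3 \<times> s3"
  define g where "g p = (if fst p = gr2 i' then T2 (snd p) i' j' else 0)" for p :: "s3 \<times> s3"
  define \<Phi> where "\<Phi> y = (\<Sum>p\<in>UNIV. \<Sum>q\<in>UNIV. y (p, q) * f p * g q)" for y :: dS3_tens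
  have lf: "(\<Sum>p\<in>UNIV. b p * f p) = 0" if "b \<in> I" for b
    using k1 that ii sum_pair_sel[of b "gr1 i" "\<lambda>h. T1 h i j"] unfolding kills_def f_def by auto
  have lg: "(\<Sum>p\<in>UNIV. b p * g p) = 0" if "b \<in> I" for b
    using k2 that ii sum_pair_sel[of b "gr2 i'" "\<lambda>h. T2 h i' j'"] unfolding kills_def g_def by auto
  have split: "\<Phi> (\<lambda>(p, q). a' p * b q + y (p, q)) = (\<Sum>p\<in>UNIV. a' p * f p) * (\<Sum>q\<in>UNIV. b q * g q) + \<Phi> y"
    for a' b y
    unfolding \<Phi>_def sum_product
    by (simp add: sum.distrib algebra_simps)
  have "y \<in> tens_sum I \<Longrightarrow> \<Phi> y = 0" for y
  proof (induction rule: tens_sum.induct)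
    case zero then show ?case by (simp add: \<Phi>_def)
  next
    case (left a' y b) then show ?case by (simp add: split lf)
  next
    case (right b y a') then show ?case by (simp add: split lg)
  qed
  then have z: "\<Phi> (d_comult a) = 0" using com aI by blast
  have "\<Phi> (d_comult a) = (\<Sum>p\<in>UNIV. \<Sum>q\<in>UNIV. (if snd p = snd q then a (s3_mult (fst p) (fst q), snd p) else 0) * f p * g q)"
    unfolding \<Phi>_def by (intro sum.cong refl) (auto simp: d_comult_eq)
  also have "\<dots> = (\<Sum>p\<in>UNIV. f p * (\<Sum>q\<in>UNIV. (if snd p = snd q then a (s3_mult (fst p) (fst q), snd p) else 0) * g q))"
    by (simp add: sum_distrib_left algebra_simps)
  also have "\<dots> = (\<Sum>p\<in>UNIV. f p * (a (s3_mult (fst p) (gr2 i'), snd p) * T2 (snd p) i' j'))"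
    unfolding g_def
    using sum_pair_sel2[of "snd p" "\<lambda>g. a (s3_mult (fst p) g, snd p)" "gr2 i'" "\<lambda>h. T2 h i' j'" for p]
    by simp
  also have "\<dots> = (\<Sum>p\<in>UNIV. (a (s3_mult (fst p) (gr2 i'), snd p) * T2 (snd p) i' j') * (if fst p = gr1 i then T1 (snd p) i j else 0))"
    unfolding f_def by (simp add: mult.commute)
  also have "\<dots> = (\<Sum>h\<in>UNIV. (a (s3_mult (gr1 i) (gr2 i'), h) * T2 h i' j') * T1 h i j)"
    by (rule sum_pair_sel[of "\<lambda>p. a (s3_mult (fst p) (gr2 i'), snd p) * T2 (snd p) i' j'", simplified])
  also have "\<dots> = (\<Sum>h\<in>UNIV. a (s3_mult (gr1 i) (gr2 i'), h) * (T1 h i j * T2 h i' j'))"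
    by (simp add: algebra_simps)
  finally show ?thesis using z by simp
qed

lemma kills_tensor:
  assumes com: "\<forall>a\<in>I. d_comult a \<in> tens_sum I"
    and k1: "kills I gr1 T1 A" and k2: "kills I gr2 T2 B"
  shows "kills I (\<lambda>(i,i'). s3_mult (gr1 i) (gr2 i')) (\<lambda>h (i,i') (j,j'). T1 h i j * T2 h i' j') (A \<times> B)"
  unfolding kills_def using kills_tensor0[OF assms] by auto

definition PM :: "nat \<Rightarrow> (nat \<Rightarrow> nat) \<Rightarrow> complex mat" where
  "PM n p = mat n n (\<lambda>(i, j). if j = p i then 1 else 0)"

lemma PM_mult: assumes "\<forall>i<n. p i < n" shows "PM n p * PM n q = PM n (q \<circ> p)"
proof (rule eq_matI)
  fix i j assume ij: "i < dim_row (PM n (q \<circ> p))" "j < dim_col (PM n (q \<circ> p))"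
  then have i: "i < n" and j: "j < n" by (auto simp: PM_def)
  have "(PM n p * PM n q) $$ (i, j) = (\<Sum>k<n. (if k = p i then 1 else 0) * (if j = q k then 1 else 0))"
    using i j by (simp add: PM_def scalar_prod_def atLeast0LessThan row_def col_def)
  also have "\<dots> = (if j = q (p i) then 1 else 0)"
    using assms i by (simp add: if_distrib[of "\<lambda>x. x * _"] sum.delta cong: if_cong)
  finally show "(PM n p * PM n q) $$ (i, j) = PM n (q \<circ> p) $$ (i, j)" using i j by (simp add: PM_def)
qed (auto simp: PM_def)

lemma PM_id: "PM n id = 1\<^sub>m n"
  by (rule eq_matI) (auto simp: PM_def)

definition sperm :: "nat \<Rightarrow> nat" where "sperm i = (if i = 0 then 0 else if i = 1 then 2 else 1)"
definition rperm :: "nat \<Rightarrow> nat" where "rperm i = (if i = 0 then 2 else if i = 1 then 0 else 1)"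

lemma less3: "i < (3::nat) \<longleftrightarrow> i = 0 \<or> i = 1 \<or> i = 2" by auto

lemma Ts6_PM: "Ts6 = PM 3 sperm"
  by (rule eq_matI) (auto simp: Ts6_def PM_def sperm_def mat_of_rows_list_def less3)

lemma Tr_PM: "Tr67 = PM 3 rperm"
  by (rule eq_matI) (auto simp: Tr67_def PM_def rperm_def mat_of_rows_list_def less3)

lemma Ts7_PM: "Ts7 = (-1) \<cdot>\<^sub>m PM 3 sperm"
  by (rule eq_matI) (auto simp: Ts7_def PM_def sperm_def mat_of_rows_list_def less3)

lemma PM_carrier[simp]: "PM n p \<in> carrier_mat n n" by (simp add: PM_def)
lemma PM_dim[simp]: "dim_row (PM n p) = n" "dim_col (PM n p) = n" by (simp_all add: PM_def)

lemma sperm_lt: "\<forall>i<3. sperm i < 3" and rperm_lt: "\<forall>i<3. rperm i < 3"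
  by (auto simp: sperm_def rperm_def)
lemma rr_lt: "\<forall>i<3. (rperm \<circ> rperm) i < 3"
  by (auto simp: rperm_def)

lemma Tr_pow0: "Tr67 ^\<^sub>m 0 = PM 3 id" by (simp add: Tr_PM PM_id)
lemma Tr_pow1: "Tr67 ^\<^sub>m Suc 0 = PM 3 rperm" by (simp add: Tr_PM)
lemma Tr_pow2: "Tr67 ^\<^sub>m 2 = PM 3 (rperm \<circ> rperm)"
  by (simp add: Tr_PM numeral_2_eq_2 PM_mult rperm_lt)
lemma Ts6_pow0: "Ts6 ^\<^sub>m 0 = PM 3 id" by (simp add: Ts6_PM PM_id)
lemma Ts6_pow1: "Ts6 ^\<^sub>m Suc 0 = PM 3 sperm" by (simp add: Ts6_PM)
lemma Ts7_pow0: "Ts7 ^\<^sub>m 0 = PM 3 id" by (simp add: Ts7_PM PM_id)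
lemma Ts7_pow1: "Ts7 ^\<^sub>m Suc 0 = (-1) \<cdot>\<^sub>m PM 3 sperm" by (simp add: Ts7_PM)

fun act67 :: "nat \<Rightarrow> s3 \<Rightarrow> nat" where
  "act67 i E = i"
| "act67 i R = (if i = 0 then 2 else if i = 1 then 0 else 1)"
| "act67 i R2 = (if i = 0 then 1 else if i = 1 then 2 else 0)"
| "act67 i S = (if i = 0 then 0 else if i = 1 then 2 else 1)"
| "act67 i SR = (if i = 0 then 2 else if i = 1 then 1 else 0)"
| "act67 i SR2 = (if i = 0 then 1 else if i = 1 then 0 else 2)"

definition Tab :: "complex \<Rightarrow> s3 \<Rightarrow> nat \<Rightarrow> nat \<Rightarrow> complex" where
  "Tab \<epsilon> h i j = (if j = act67 i h then \<epsilon> ^ sexp h else 0)"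

lemma PM_entry: "i < n \<Longrightarrow> j < n \<Longrightarrow> PM n p $$ (i, j) = (if j = p i then 1 else 0)"
  by (simp add: PM_def)

lemma T6_entry: assumes "i < 3" "j < 3"
  shows "(Ts6 ^\<^sub>m sexp h * Tr67 ^\<^sub>m rexp h) $$ (i, j) = Tab 1 h i j"
proof (cases h)
  case E then show ?thesis using assms by (simp del: pow_mat.simps add: Ts6_pow0 Tr_pow0 PM_mult PM_entry Tab_def sperm_def rperm_def less3 sperm_lt rperm_lt rr_lt)
next
  case R then show ?thesis using assms by (simp del: pow_mat.simps add: Ts6_pow0 Tr_pow1 PM_mult PM_entry Tab_def sperm_def rperm_def less3 sperm_lt rperm_lt rr_lt)
next
  case R2 then show ?thesis using assms by (simp del: pow_mat.simps add: Ts6_pow0 Tr_pow2 PM_mult PM_entry Tab_def sperm_def rperm_def less3 sperm_lt rperm_lt rr_lt)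
next
  case S then show ?thesis using assms by (simp del: pow_mat.simps add: Ts6_pow1 Tr_pow0 PM_mult PM_entry Tab_def sperm_lt sperm_def rperm_def less3 sperm_lt rperm_lt rr_lt)
next
  case SR then show ?thesis using assms by (simp del: pow_mat.simps add: Ts6_pow1 Tr_pow1 PM_mult PM_entry Tab_def sperm_lt sperm_def rperm_def less3 sperm_lt rperm_lt rr_lt)
next
  case SR2 then show ?thesis using assms by (simp del: pow_mat.simps add: Ts6_pow1 Tr_pow2 PM_mult PM_entry Tab_def sperm_lt sperm_def rperm_def less3 sperm_lt rperm_lt rr_lt)
qed


lemma smPM: "(c \<cdot>\<^sub>m PM n p) * PM n q = c \<cdot>\<^sub>m (PM n p * PM n q)"
  by (rule mult_smult_assoc_mat) auto

lemma T7_entry: assumes "i < 3" "j < 3"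
  shows "(Ts7 ^\<^sub>m sexp h * Tr67 ^\<^sub>m rexp h) $$ (i, j) = Tab (-1) h i j"
proof (cases h)
  case E then show ?thesis using assms by (simp del: pow_mat.simps add: Ts7_pow0 Tr_pow0 PM_mult PM_entry smPM Tab_def sperm_def rperm_def less3 sperm_lt rperm_lt rr_lt)
next
  case R then show ?thesis using assms by (simp del: pow_mat.simps add: Ts7_pow0 Tr_pow1 PM_mult PM_entry smPM Tab_def sperm_def rperm_def less3 sperm_lt rperm_lt rr_lt)
next
  case R2 then show ?thesis using assms by (simp del: pow_mat.simps add: Ts7_pow0 Tr_pow2 PM_mult PM_entry smPM Tab_def sperm_def rperm_def less3 sperm_lt rperm_lt rr_lt)
next
  case S then show ?thesis using assms by (simp del: pow_mat.simps add: Ts7_pow1 Tr_pow0 PM_mult PM_entry smPM Tab_def sperm_lt sperm_def rperm_def less3 sperm_lt rperm_lt rr_lt)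
next
  case SR then show ?thesis using assms by (simp del: pow_mat.simps add: Ts7_pow1 Tr_pow1 PM_mult PM_entry smPM Tab_def sperm_lt sperm_def rperm_def less3 sperm_lt rperm_lt rr_lt)
next
  case SR2 then show ?thesis using assms by (simp del: pow_mat.simps add: Ts7_pow1 Tr_pow2 PM_mult PM_entry smPM Tab_def sperm_lt sperm_def rperm_def less3 sperm_lt rperm_lt rr_lt)
qed

lemma act67_mem: "i < 3 \<Longrightarrow> act67 i h \<in> {0,1,2}"
  by (cases h) auto

lemma grade67_2[simp]: "grade67 2 = SR2" by (simp add: numeral_2_eq_2)

lemma kills_D: "kills I gr T A \<Longrightarrow> a \<in> I \<Longrightarrow> i \<in> A \<Longrightarrow> j \<in> A \<Longrightarrow> (\<Sum>h\<in>UNIV. a (gr i, h) * T h i j) = 0"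
  unfolding kills_def by blast

lemma kill_all:
  assumes com: "\<forall>a\<in>I. d_comult a \<in> tens_sum I"
    and K: "kills I grade67 (Tab \<epsilon>) {0,1,2}" and eps: "\<epsilon> \<noteq> 0" and aI: "a \<in> I"
  shows "a p = 0"
proof -
  note K2 = kills_tensor[OF com K K]
  note K3 = kills_tensor[OF com K2 K]
  note K4 = kills_tensor[OF com K2 K2]
  obtain g h0 where p: "p = (g, h0)" by fastforce
  have "a (g, h0) = 0"
  proof (cases g)
    case R
    have "(\<Sum>h\<in>UNIV. a (R, h) * (Tab \<epsilon> h 0 (act67 0 h0) * Tab \<epsilon> h 1 (act67 1 h0))) = 0"
      using kills_D[OF K2 aI, of "(0,1)" "(act67 0 h0, act67 1 h0)"] act67_mem[of 0 h0] act67_mem[of 1 h0] act67_mem[of 2 h0]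
      by (simp only: SigmaI insertI1 insertI2 mem_Times_iff) simp
    then show ?thesis using R eps by (cases h0) (simp_all add: sum_s3 Tab_def)
  next
    case R2
    have "(\<Sum>h\<in>UNIV. a (R2, h) * (Tab \<epsilon> h 1 (act67 1 h0) * Tab \<epsilon> h 0 (act67 0 h0))) = 0"
      using kills_D[OF K2 aI, of "(1,0)" "(act67 1 h0, act67 0 h0)"] act67_mem[of 0 h0] act67_mem[of 1 h0] act67_mem[of 2 h0]
      by (simp only: SigmaI insertI1 insertI2 mem_Times_iff) simp
    then show ?thesis using R2 eps by (cases h0) (simp_all add: sum_s3 Tab_def)
  next
    case S
    have "(\<Sum>h\<in>UNIV. a (S, h) * ((Tab \<epsilon> h 0 (act67 0 h0) * Tab \<epsilon> h 1 (act67 1 h0)) * Tab \<epsilon> h 1 (act67 1 h0))) = 0"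
      using kills_D[OF K3 aI, of "((0,1),1)" "((act67 0 h0, act67 1 h0), act67 1 h0)"] act67_mem[of 0 h0] act67_mem[of 1 h0] act67_mem[of 2 h0]
      by (simp only: SigmaI insertI1 insertI2 mem_Times_iff) simp
    then show ?thesis using S eps by (cases h0) (simp_all add: sum_s3 Tab_def)
  next
    case SR
    have "(\<Sum>h\<in>UNIV. a (SR, h) * ((Tab \<epsilon> h 1 (act67 1 h0) * Tab \<epsilon> h 0 (act67 0 h0)) * Tab \<epsilon> h 0 (act67 0 h0))) = 0"
      using kills_D[OF K3 aI, of "((1,0),0)" "((act67 1 h0, act67 0 h0), act67 0 h0)"] act67_mem[of 0 h0] act67_mem[of 1 h0] act67_mem[of 2 h0]
      by (simp only: SigmaI insertI1 insertI2 mem_Times_iff) simp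
    then show ?thesis using SR eps by (cases h0) (simp_all add: sum_s3 Tab_def)
  next
    case SR2
    have "(\<Sum>h\<in>UNIV. a (SR2, h) * ((Tab \<epsilon> h 2 (act67 2 h0) * Tab \<epsilon> h 0 (act67 0 h0)) * Tab \<epsilon> h 0 (act67 0 h0))) = 0"
      using kills_D[OF K3 aI, of "((2,0),0)" "((act67 2 h0, act67 0 h0), act67 0 h0)"] act67_mem[of 0 h0] act67_mem[of 1 h0] act67_mem[of 2 h0]
      by (simp only: SigmaI insertI1 insertI2 mem_Times_iff) simp
    then show ?thesis using SR2 eps by (cases h0) (simp_all add: sum_s3 Tab_def)
  next
    case E
    have "(\<Sum>h\<in>UNIV. a (E, h) * ((Tab \<epsilon> h 0 (act67 0 h0) * Tab \<epsilon> h 1 (act67 1 h0)) * (Tab \<epsilon> h 1 (act67 1 h0) * Tab \<epsilon> h 0 (act67 0 h0)))) = 0"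
      using kills_D[OF K4 aI, of "((0,1),(1,0))" "((act67 0 h0, act67 1 h0), (act67 1 h0, act67 0 h0))"] act67_mem[of 0 h0] act67_mem[of 1 h0] act67_mem[of 2 h0]
      by (simp only: SigmaI insertI1 insertI2 mem_Times_iff) simp
    then show ?thesis using E eps by (cases h0) (simp_all add: sum_s3 Tab_def)
  qed
  then show ?thesis using p by simp
qed

lemma V6_entry: "i < 3 \<Longrightarrow> j < 3 \<Longrightarrow> V6 a $$ (i, j) = (\<Sum>h\<in>UNIV. a (grade67 i, h) * Tab 1 h i j)"
  by (simp add: V6_def graded_act_def T6_entry)
lemma V7_entry: "i < 3 \<Longrightarrow> j < 3 \<Longrightarrow> V7 a $$ (i, j) = (\<Sum>h\<in>UNIV. a (grade67 i, h) * Tab (-1) h i j)"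
  by (simp add: V7_def graded_act_def T7_entry)
lemma V6_car: "V6 a \<in> carrier_mat 3 3" by (simp add: V6_def graded_act_def)
lemma V7_car: "V7 a \<in> carrier_mat 3 3" by (simp add: V7_def graded_act_def)

lemma backward_gen:
  assumes Vcar: "\<And>a. V a \<in> carrier_mat 3 3"
    and Ventry: "\<And>a i j. i < 3 \<Longrightarrow> j < 3 \<Longrightarrow> V a $$ (i, j) = (\<Sum>h\<in>UNIV. a (grade67 i, h) * Tab \<epsilon> h i j)"
    and eps: "\<epsilon> \<noteq> 0"
    and iso: "iso_to_summand 3 V n act"
  shows "inner_faithful n act"
  unfolding inner_faithful_def
proof
  assume "\<exists>I. hopf_ideal I \<and> I \<noteq> {\<lambda>_. 0} \<and> (\<forall>a\<in>I. act a = 0\<^sub>m n n)"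
  then obtain I where hI: "hopf_ideal I" and ne: "I \<noteq> {\<lambda>_. 0}" and kill: "\<forall>a\<in>I. act a = 0\<^sub>m n n"
    by blast
  obtain F P where F: "F \<in> carrier_mat 3 n" and P: "P \<in> carrier_mat n 3"
    and iF: "\<forall>a. V a * F = F * act a" and FP: "F * P = 1\<^sub>m 3"
    using iso unfolding iso_to_summand_def by blast
  have V0: "V a = 0\<^sub>m 3 3" if "a \<in> I" for a
  proof -
    have "V a = V a * (F * P)" using FP Vcar[of a] by simp
    also have "\<dots> = (V a * F) * P" using Vcar[of a] F P by (simp add: assoc_mult_mat)
    also have "\<dots> = (F * act a) * P" using iF by simp
    also have "\<dots> = 0\<^sub>m 3 3" using kill that F P by simp
    finally show ?thesis .
  qed
  have K: "kills I grade67 (Tab \<epsilon>) {0,1,2}"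
    unfolding kills_def
  proof (intro ballI)
    fix a i j assume a: "a \<in> I" and i: "i \<in> {0::nat,1,2}" and j: "j \<in> {0::nat,1,2}"
    then have "i < 3" "j < 3" by auto
    then show "(\<Sum>h\<in>UNIV. a (grade67 i, h) * Tab \<epsilon> h i j) = 0"
      using Ventry[of i j a] V0[OF a] by simp
  qed
  have com: "\<forall>a\<in>I. d_comult a \<in> tens_sum I" using hI unfolding hopf_ideal_def by blast
  have z: "a = (\<lambda>_. 0)" if "a \<in> I" for a
    using kill_all[OF com K eps that] by auto
  have "(\<lambda>_. 0) \<in> I" using hI unfolding hopf_ideal_def subspace_d_def by blast
  then have "I = {\<lambda>_. 0}" using z by blast
  then show False using ne by blast
qed

definition odd3 :: "s3 \<Rightarrow> bool" where "odd3 g \<longleftrightarrow> g = S \<or> g = SR \<or> g = SR2"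

definition I0 :: "dS3 set" where "I0 = {a. \<forall>g h. \<not> odd3 g \<longrightarrow> a (g, h) = 0}"

lemma conj_even: "\<not> odd3 g \<Longrightarrow> \<not> odd3 (s3_mult (s3_mult (s3_inv h) g) h)"
  by (cases g; cases h; simp add: odd3_def)

lemma anti_even: "\<not> odd3 g' \<Longrightarrow> g' = s3_mult (s3_mult (s3_inv h) (s3_inv g)) h \<Longrightarrow> \<not> odd3 g"
  by (cases g; cases h; simp add: odd3_def)

lemma prod_even: "\<not> odd3 x \<Longrightarrow> \<not> odd3 y \<Longrightarrow> \<not> odd3 (s3_mult x y)"
  by (cases x; cases y; simp add: odd3_def)

lemma ts_add: "x \<in> tens_sum I \<Longrightarrow> y \<in> tens_sum I \<Longrightarrow> (\<lambda>z. x z + y z) \<in> tens_sum I"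
proof (induction rule: tens_sum.induct)
  case zero then show ?case by simp
next
  case (left a x b)
  have "(\<lambda>z. (case z of (p, q) \<Rightarrow> a p * b q + x (p, q)) + y z) = (\<lambda>(p, q). a p * b q + (\<lambda>z. x z + y z) (p, q))"
    by (auto simp: algebra_simps)
  moreover have "(\<lambda>(p, q). a p * b q + (\<lambda>z. x z + y z) (p, q)) \<in> tens_sum I"
    by (rule tens_sum.left[OF left.hyps(1) left.IH[OF left.prems]])
  ultimately show ?case by simp
next
  case (right b x a)
  have "(\<lambda>z. (case z of (p, q) \<Rightarrow> a p * b q + x (p, q)) + y z) = (\<lambda>(p, q). a p * b q + (\<lambda>z. x z + y z) (p, q))"
    by (auto simp: algebra_simps)
  moreover have "(\<lambda>(p, q). a p * b q + (\<lambda>z. x z + y z) (p, q)) \<in> tens_sum I"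
    by (rule tens_sum.right[OF right.hyps(1) right.IH[OF right.prems]])
  ultimately show ?case by simp
qed

lemma ts_sum: "finite X \<Longrightarrow> (\<forall>x\<in>X. f x \<in> tens_sum I) \<Longrightarrow> (\<lambda>z. \<Sum>x\<in>X. f x z) \<in> tens_sum I"
proof (induction rule: finite_induct)
  case empty
  have "(\<lambda>z. \<Sum>x\<in>{}. f x z) = (\<lambda>_. 0)" by simp
  then show ?case using tens_sum.zero by simp
next
  case (insert x F)
  then show ?case using ts_add[of "f x" I "\<lambda>z. \<Sum>x\<in>F. f x z"] by simp
qed

lemma ts_left: assumes "a \<in> I" shows "(\<lambda>(p, q). a p * b q) \<in> tens_sum I"
proof -
  have "(\<lambda>(p, q). a p * b q + (\<lambda>_. 0) (p, q)) \<in> tens_sum I"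
    by (rule tens_sum.left[OF assms tens_sum.zero])
  then show ?thesis by simp
qed
lemma ts_right: assumes "b \<in> I" shows "(\<lambda>(p, q). a p * b q) \<in> tens_sum I"
proof -
  have "(\<lambda>(p, q). a p * b q + (\<lambda>_. 0) (p, q)) \<in> tens_sum I"
    by (rule tens_sum.right[OF assms tens_sum.zero])
  then show ?thesis by simp
qed

lemma comult_decomp_pt: "d_comult a ((g1, h1), (g2, h2)) = (\<Sum>t\<in>UNIV. (\<lambda>(p, q). basis_elt (fst t) (snd (snd t)) p *
      (a (s3_mult (fst t) (fst (snd t)), snd (snd t)) * basis_elt (fst (snd t)) (snd (snd t)) q)) ((g1, h1), (g2, h2)))"
proof -
  have "(\<Sum>t\<in>UNIV. (\<lambda>(p, q). basis_elt (fst t) (snd (snd t)) p *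
      (a (s3_mult (fst t) (fst (snd t)), snd (snd t)) * basis_elt (fst (snd t)) (snd (snd t)) q)) ((g1, h1), (g2, h2)))
    = (\<Sum>t\<in>UNIV. if t = (g1, g2, h1) then (if h2 = h1 then a (s3_mult g1 g2, h1) else 0) else 0)"
    by (rule sum.cong) (auto simp: basis_elt_def)
  also have "\<dots> = d_comult a ((g1, h1), (g2, h2))"
    by (simp add: d_comult_eq)
  finally show ?thesis by simp
qed

lemma comult_decomp: "d_comult a = (\<lambda>z. \<Sum>t\<in>UNIV. (\<lambda>(p, q). basis_elt (fst t) (snd (snd t)) p *
      (a (s3_mult (fst t) (fst (snd t)), snd (snd t)) * basis_elt (fst (snd t)) (snd (snd t)) q)) z)"
proof (rule ext)
  fix z :: "(s3 \<times> s3) \<times> s3 \<times> s3"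
  obtain g1 h1 g2 h2 where "z = ((g1, h1), (g2, h2))" by (metis prod.collapse)
  then show "d_comult a z = (\<Sum>t\<in>UNIV. (\<lambda>(p, q). basis_elt (fst t) (snd (snd t)) p *
      (a (s3_mult (fst t) (fst (snd t)), snd (snd t)) * basis_elt (fst (snd t)) (snd (snd t)) q)) z)"
    using comult_decomp_pt by simp
qed

lemma I0_hopf: "hopf_ideal I0"
  unfolding hopf_ideal_def
proof (intro conjI)
  show "subspace_d I0" unfolding subspace_d_def I0_def d_add_def d_scale_def by auto
  show "\<forall>a\<in>I0. \<forall>b. d_mult a b \<in> I0 \<and> d_mult b a \<in> I0"
  proof (intro ballI allI conjI)
    fix a b assume a: "a \<in> I0"
    then have a0: "\<And>g h. \<not> odd3 g \<Longrightarrow> a (g, h) = 0" unfolding I0_def by blast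
    show "d_mult a b \<in> I0" unfolding I0_def
      by (simp add: d_mult_eq a0)
    show "d_mult b a \<in> I0" unfolding I0_def
      by (simp add: d_mult_eq a0 conj_even)
  qed
  show "\<forall>a\<in>I0. d_counit a = 0"
  proof
    fix a assume a: "a \<in> I0"
    then have a0: "\<And>g h. \<not> odd3 g \<Longrightarrow> a (g, h) = 0" unfolding I0_def by blast
    show "d_counit a = 0" unfolding d_counit_def
      by (rule sum.neutral) (auto simp: a0 odd3_def)
  qed
  show "\<forall>a\<in>I0. d_antipode a \<in> I0"
  proof
    fix a assume a: "a \<in> I0"
    then have a0: "\<And>g h. \<not> odd3 g \<Longrightarrow> a (g, h) = 0" unfolding I0_def by blast
    show "d_antipode a \<in> I0" unfolding I0_def d_antipode_def
    proof (clarify)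
      fix g' h' assume ev: "\<not> odd3 g'"
      show "(\<Sum>(g, h)\<in>UNIV. if g' = s3_mult (s3_mult (s3_inv h) (s3_inv g)) h \<and> h' = s3_inv h then a (g, h) else 0) = 0"
        by (rule sum.neutral) (auto simp: a0 dest: anti_even[OF ev])
    qed
  qed
  show "\<forall>a\<in>I0. d_comult a \<in> tens_sum I0"
  proof
    fix a assume a: "a \<in> I0"
    show "d_comult a \<in> tens_sum I0"
      unfolding comult_decomp
    proof (rule ts_sum, simp, rule ballI)
      fix t :: "s3 \<times> s3 \<times> s3"
      obtain x y h where t: "t = (x, y, h)" by (cases t) auto
      show "(\<lambda>(p, q). basis_elt (fst t) (snd (snd t)) p *
        (a (s3_mult (fst t) (fst (snd t)), snd (snd t)) * basis_elt (fst (snd t)) (snd (snd t)) q)) \<in> tens_sum I0"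
      proof (cases "odd3 x")
        case True
        then have "basis_elt x h \<in> I0" unfolding I0_def basis_elt_def by auto
        then show ?thesis unfolding t by (simp add: ts_left)
      next
        case False
        have "(\<lambda>q. a (s3_mult x y, h) * basis_elt y h q) \<in> I0"
          using a False prod_even[OF False, of y] unfolding I0_def basis_elt_def by auto
        then show ?thesis unfolding t by (simp add: ts_right)
      qed
    qed
  qed
qed

lemma I0_ne: "I0 \<noteq> {\<lambda>_. 0}"
proof
  assume "I0 = {\<lambda>_. 0}"
  moreover have "basis_elt S E \<in> I0" unfolding I0_def basis_elt_def odd3_def by auto
  ultimately have "basis_elt S E = (\<lambda>_. 0)" by blast
  then have "basis_elt S E (S, E) = 0" by simp
  then show False by (simp add: basis_elt_def)
qed

definition grp :: "s3 \<Rightarrow> dS3" where "grp h = (\<lambda>(g, k). if k = h then 1 else 0)"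

lemma sum_delta_mult: fixes f :: "s3 \<Rightarrow> complex"
  shows "(\<Sum>x\<in>UNIV. (if x = c then 1 else 0) * f x) = f c"
  by (simp add: if_distrib[of "\<lambda>x. x * _"] sum.delta cong: if_cong)

lemma inv_mult_iff: "(s3_mult (s3_inv h) k0 = k) \<longleftrightarrow> (k0 = s3_mult h k)"
  by (cases h; cases k0; cases k; simp)

lemma r1: "d_mult (grp h) (grp k) = grp (s3_mult h k)"
proof (rule ext, clarify)
  fix g0 k0
  show "d_mult (grp h) (grp k) (g0, k0) = grp (s3_mult h k) (g0, k0)"
    unfolding d_mult_eq grp_def by (simp add: sum_delta_mult inv_mult_iff)
qed

lemma r2: "d_mult (basis_elt g E) (basis_elt g' E) = (if g = g' then basis_elt g E else (\<lambda>_. 0))"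
proof (rule ext, clarify)
  fix g0 k0
  show "d_mult (basis_elt g E) (basis_elt g' E) (g0, k0) = (if g = g' then basis_elt g E else (\<lambda>_. 0)) (g0, k0)"
    unfolding d_mult_eq basis_elt_def
    by (simp add: if_distrib[of "\<lambda>x. x * _"] sum.delta cong: if_cong)
qed

lemma r3: "d_mult (grp h) (basis_elt g E) = d_mult (basis_elt (s3_mult (s3_mult h g) (s3_inv h)) E) (grp h)"
proof (rule ext, clarify)
  fix g0 k0
  show "d_mult (grp h) (basis_elt g E) (g0, k0) = d_mult (basis_elt (s3_mult (s3_mult h g) (s3_inv h)) E) (grp h) (g0, k0)"
    unfolding d_mult_eq basis_elt_def grp_def
    by (simp add: if_distrib[of "\<lambda>x. x * _"] sum.delta cong: if_cong) (auto simp: inv_mult_iff conj_iff)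
qed

lemma r4: "d_mult (basis_elt g E) (grp h) = basis_elt g h"
proof (rule ext, clarify)
  fix g0 k0
  show "d_mult (basis_elt g E) (grp h) (g0, k0) = basis_elt g h (g0, k0)"
    unfolding d_mult_eq basis_elt_def grp_def
    by (simp add: if_distrib[of "\<lambda>x. x * _"] sum.delta cong: if_cong)
qed

lemma r5: "d_unit = grp E" unfolding d_unit_def grp_def by simp

definition eodd :: dS3 where "eodd = d_add (basis_elt S E) (d_add (basis_elt SR E) (basis_elt SR2 E))"

lemma r6: assumes "a \<in> I0" shows "d_mult eodd a = a"
proof (rule ext, clarify)
  fix g0 k0
  have a0: "\<And>g h. \<not> odd3 g \<Longrightarrow> a (g, h) = 0" using assms unfolding I0_def by blast
  show "d_mult eodd a (g0, k0) = a (g0, k0)"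
    unfolding d_mult_eq eodd_def d_add_def basis_elt_def
    by (cases g0) (simp_all add: sum_s3 a0 odd3_def)
qed

fun hk :: "nat \<Rightarrow> s3" where "hk 0 = E" | "hk (Suc 0) = R2" | "hk _ = R"
lemma hk2[simp]: "hk 2 = R" by (simp add: numeral_2_eq_2)

definition sg :: "s3 \<Rightarrow> s3" where "sg h = (if sexp h = 0 then E else S)"

lemma T1: "k < 3 \<Longrightarrow> (s3_mult (s3_mult (hk k) g) (s3_inv (hk k)) = S) \<longleftrightarrow> grade67 k = g"
  unfolding less3 by (cases g) auto
lemma T2: "k < 3 \<Longrightarrow> s3_mult (hk k) h = s3_mult (sg h) (hk (act67 k h))"
  unfolding less3 by (cases h) (auto simp: sg_def numeral_2_eq_2)
lemma T3: "k < 3 \<Longrightarrow> s3_mult h (s3_inv (hk k)) = s3_mult (s3_inv (hk (act67 k (s3_inv h)))) (sg h)"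
  unfolding less3 by (cases h) (auto simp: sg_def numeral_2_eq_2)
lemma T4: "k < 3 \<Longrightarrow> k' < 3 \<Longrightarrow> (act67 k' h = k) \<longleftrightarrow> (k' = act67 k (s3_inv h))"
  unfolding less3 by (cases h) auto
lemma T5: "k < 3 \<Longrightarrow> k' < 3 \<Longrightarrow> k \<noteq> k' \<Longrightarrow>
   s3_mult (s3_mult (s3_mult (hk k) (s3_inv (hk k'))) S) (s3_inv (s3_mult (hk k) (s3_inv (hk k')))) \<noteq> S"
  unfolding less3 by (auto simp: numeral_2_eq_2)
lemma T6: "s3_mult (s3_mult R S) (s3_inv R) = SR" "s3_mult (s3_mult R2 S) (s3_inv R2) = SR2"
  by simp_all

lemma grpid: "s3_mult (s3_mult (s3_inv x) (s3_mult (s3_mult x g) (s3_inv x))) (s3_inv (s3_inv x)) = g"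
  by (cases x; cases g; simp)
lemma sexp01: "sexp h = 0 \<or> sexp h = 1" by (cases h) auto
lemma act67_lt: "k < 3 \<Longrightarrow> act67 k h < 3" by (cases h) auto
lemma hk_inv: "s3_mult (hk k) (s3_inv (hk k)) = E" by simp

lemma sum_Tab1: fixes f :: "nat \<Rightarrow> complex" assumes "k < 3"
  shows "(\<Sum>k'<3. Tab \<epsilon> h k k' * f k') = \<epsilon> ^ sexp h * f (act67 k h)"
proof -
  have "(\<Sum>k'<3. Tab \<epsilon> h k k' * f k') = (\<Sum>k'<3. if k' = act67 k h then \<epsilon> ^ sexp h * f k' else 0)"
    by (rule sum.cong) (auto simp: Tab_def)
  also have "\<dots> = \<epsilon> ^ sexp h * f (act67 k h)"
    using act67_lt[OF assms, of h] by (simp add: sum.delta)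
  finally show ?thesis .
qed

lemma sum_Tab2: fixes f :: "nat \<Rightarrow> complex" assumes "k < 3"
  shows "(\<Sum>k'<3. f k' * (if grade67 k' = g then Tab \<epsilon> h k' k else 0))
     = (if grade67 (act67 k (s3_inv h)) = g then \<epsilon> ^ sexp h * f (act67 k (s3_inv h)) else 0)"
proof -
  have "(\<Sum>k'<3. f k' * (if grade67 k' = g then Tab \<epsilon> h k' k else 0))
     = (\<Sum>k'<3. if k' = act67 k (s3_inv h) then (if grade67 k' = g then \<epsilon> ^ sexp h * f k' else 0) else 0)"
  proof (rule sum.cong[OF refl])
    fix k' assume "k' \<in> {..<3::nat}"
    then have "(k = act67 k' h) \<longleftrightarrow> (k' = act67 k (s3_inv h))" using T4[OF assms, of k' h] by auto
    then show "f k' * (if grade67 k' = g then Tab \<epsilon> h k' k else 0) =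
      (if k' = act67 k (s3_inv h) then (if grade67 k' = g then \<epsilon> ^ sexp h * f k' else 0) else 0)"
      by (auto simp: Tab_def)
  qed
  also have "\<dots> = (if grade67 (act67 k (s3_inv h)) = g then \<epsilon> ^ sexp h * f (act67 k (s3_inv h)) else 0)"
    using act67_lt[OF assms, of "s3_inv h"] by (simp add: sum.delta)
  finally show ?thesis .
qed

locale srep =
  fixes n :: nat and A :: "s3 \<Rightarrow> complex mat" and Pg :: "s3 \<Rightarrow> complex mat"
  assumes Acar[simp]: "\<And>h. A h \<in> carrier_mat n n" and Pcar[simp]: "\<And>g. Pg g \<in> carrier_mat n n"
    and AA: "\<And>h k. A h * A k = A (s3_mult h k)" and A1: "A E = 1\<^sub>m n"
    and PP: "\<And>g g'. Pg g * Pg g' = (if g = g' then Pg g else 0\<^sub>m n n)"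
    and AP: "\<And>h g. A h * Pg g = Pg (s3_mult (s3_mult h g) (s3_inv h)) * A h"
begin

lemma ma: "X \<in> carrier_mat n n \<Longrightarrow> Y \<in> carrier_mat n n \<Longrightarrow> Z \<in> carrier_mat n n \<Longrightarrow> X * Y * Z = X * (Y * Z)"
  by (rule assoc_mult_mat) auto
lemma sqm[simp]: "X \<in> carrier_mat n n \<Longrightarrow> Y \<in> carrier_mat n n \<Longrightarrow> X * Y \<in> carrier_mat n n"
  by simp
lemma z1[simp]: "(X :: complex mat) \<in> carrier_mat n n \<Longrightarrow> X * 0\<^sub>m n n = 0\<^sub>m n n" by simp
lemma z2[simp]: "(X :: complex mat) \<in> carrier_mat n n \<Longrightarrow> 0\<^sub>m n n * X = 0\<^sub>m n n" by simp
lemma o1[simp]: "(X :: complex mat) \<in> carrier_mat n n \<Longrightarrow> X * 1\<^sub>m n = X" by simp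
lemma o2[simp]: "(X :: complex mat) \<in> carrier_mat n n \<Longrightarrow> 1\<^sub>m n * X = X" by simp
lemma o3[simp]: "(1::complex) \<cdot>\<^sub>m X = X" by (rule eq_matI) auto
lemma cd1[simp]: "X \<in> carrier_mat n n \<Longrightarrow> dim_row X = n" by auto
lemma cd2[simp]: "X \<in> carrier_mat n n \<Longrightarrow> dim_col X = n" by auto
lemma AA': "X \<in> carrier_mat n n \<Longrightarrow> A h * (A k * X) = A (s3_mult h k) * X"
  by (simp add: ma[symmetric] AA)
lemma PP': "X \<in> carrier_mat n n \<Longrightarrow> Pg g * (Pg g' * X) = (if g = g' then Pg g * X else 0\<^sub>m n n)"
  by (simp add: ma[symmetric] PP)
lemma AP': "X \<in> carrier_mat n n \<Longrightarrow> A h * (Pg g * X) = Pg (s3_mult (s3_mult h g) (s3_inv h)) * (A h * X)"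
  by (simp add: ma[symmetric] AP)
lemma ASPs: "A S * Pg S = Pg S * A S" using AP[of S S] by simp
lemma ASPs': "X \<in> carrier_mat n n \<Longrightarrow> A S * (Pg S * X) = Pg S * (A S * X)"
  by (simp add: ma[symmetric] ASPs)
lemma ASAS: "X \<in> carrier_mat n n \<Longrightarrow> A S * (A S * X) = X"
  by (simp add: AA' A1)
lemma dl: "X \<in> carrier_mat n n \<Longrightarrow> Y \<in> carrier_mat n n \<Longrightarrow> Z \<in> carrier_mat n n \<Longrightarrow> (X + Y) * Z = X * Z + Y * Z"
  by (rule add_mult_distrib_mat) auto
lemma dr: "X \<in> carrier_mat n n \<Longrightarrow> Y \<in> carrier_mat n n \<Longrightarrow> Z \<in> carrier_mat n n \<Longrightarrow> X * (Y + Z) = X * Y + X * Z"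
  by (rule mult_add_distrib_mat) auto
lemma sl: "(X :: complex mat) \<in> carrier_mat n n \<Longrightarrow> Y \<in> carrier_mat n n \<Longrightarrow> (c \<cdot>\<^sub>m X) * Y = c \<cdot>\<^sub>m (X * Y)"
  by (rule mult_smult_assoc_mat) auto
lemma sr: "(X :: complex mat) \<in> carrier_mat n n \<Longrightarrow> Y \<in> carrier_mat n n \<Longrightarrow> X * (c \<cdot>\<^sub>m Y) = c \<cdot>\<^sub>m (X * Y)"
  by (rule mult_smult_distrib) auto

end

context srep begin

lemma forward_eps:
  assumes eps: "\<epsilon> = 1 \<or> \<epsilon> = -1"
    and u0: "u0 \<in> carrier_mat n n" and u0Ps: "u0 * Pg S = u0"
    and i: "i < n" and j: "j < n"
    and nz: "(u0 + \<epsilon> \<cdot>\<^sub>m (u0 * A S)) $$ (i, j) \<noteq> 0"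
  shows "\<exists>F P. F \<in> carrier_mat 3 n \<and> P \<in> carrier_mat n 3
     \<and> (\<forall>g h. mat 3 3 (\<lambda>(k, k'). if grade67 k = g then Tab \<epsilon> h k k' else 0) * F = F * (Pg g * A h))
     \<and> (\<forall>g h. Pg g * A h * P = P * mat 3 3 (\<lambda>(k, k'). if grade67 k = g then Tab \<epsilon> h k k' else 0))
     \<and> F * P = 1\<^sub>m 3"
proof -
  define Ps where "Ps = Pg S"
  have Ps[simp]: "Ps \<in> carrier_mat n n" by (simp add: Ps_def)
  have e2: "\<epsilon> * \<epsilon> = 1" using eps by auto
  define w where "w = u0 + \<epsilon> \<cdot>\<^sub>m (u0 * A S)"
  have w[simp]: "w \<in> carrier_mat n n" using u0 by (simp add: w_def)
  have wPs: "w * Ps = w"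
  proof -
    have "w * Ps = u0 * Ps + \<epsilon> \<cdot>\<^sub>m (u0 * (A S * Ps))"
      using u0 by (simp add: w_def dl sl ma)
    also have "\<dots> = w" using u0 u0Ps by (simp add: Ps_def ASPs ma[symmetric] w_def)
    finally show ?thesis .
  qed
  have wAS: "w * A S = \<epsilon> \<cdot>\<^sub>m w"
  proof -
    have "w * A S = u0 * A S + \<epsilon> \<cdot>\<^sub>m u0"
      using u0 by (simp add: w_def dl sl ma AA A1)
    also have "\<dots> = \<epsilon> \<cdot>\<^sub>m w"
      using u0 e2 unfolding w_def
      by (subst add_smult_distrib_left_mat[of _ n n]) (auto simp: smult_smult_assoc comm_add_mat[of _ n n])
    finally show ?thesis .
  qed
  have wP: "w * Pg x = (if x = S then w else 0\<^sub>m n n)" for x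
  proof -
    have "w * Pg x = w * (Ps * Pg x)" using wPs by (simp add: ma[symmetric])
    then show ?thesis using wPs by (auto simp: Ps_def PP)
  qed
  define W where "W k = w * A (hk k)" for k
  have W[simp]: "W k \<in> carrier_mat n n" for k by (simp add: W_def)
  have Wd[simp]: "dim_row (W k) = n" "dim_col (W k) = n" for k using W[of k] unfolding carrier_mat_def by auto
  have WP: "W k * Pg g = (if grade67 k = g then W k else 0\<^sub>m n n)" if k: "k < 3" for k g
  proof -
    have "W k * Pg g = w * (Pg (s3_mult (s3_mult (hk k) g) (s3_inv (hk k))) * A (hk k))"
      by (simp add: W_def ma AP)
    also have "\<dots> = (w * Pg (s3_mult (s3_mult (hk k) g) (s3_inv (hk k)))) * A (hk k)"
      by (simp add: ma)
    also have "\<dots> = (if grade67 k = g then W k else 0\<^sub>m n n)"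
      by (simp add: wP T1[OF k] W_def)
    finally show ?thesis .
  qed
  have wsg: "w * A (sg h) = \<epsilon> ^ sexp h \<cdot>\<^sub>m w" for h
    using sexp01[of h] by (auto simp: sg_def wAS A1)
  have WA: "W k * A h = \<epsilon> ^ sexp h \<cdot>\<^sub>m W (act67 k h)" if k: "k < 3" for k h
  proof -
    have "W k * A h = w * A (s3_mult (sg h) (hk (act67 k h)))"
      by (simp add: W_def ma AA T2[OF k])
    also have "\<dots> = (w * A (sg h)) * A (hk (act67 k h))"
      by (simp add: ma AA)
    also have "\<dots> = \<epsilon> ^ sexp h \<cdot>\<^sub>m W (act67 k h)"
      by (simp add: wsg sl W_def)
    finally show ?thesis .
  qed
  define F where "F = mat 3 n (\<lambda>(k, l). W k $$ (i, l))"
  have F[simp]: "F \<in> carrier_mat 3 n" by (simp add: F_def)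
  have Fd[simp]: "dim_row F = 3" "dim_col F = n" by (simp_all add: F_def)
  have Ad[simp]: "dim_row (A h) = n" "dim_col (A h) = n" "dim_row (Pg h) = n" "dim_col (Pg h) = n" for h
    using Acar[of h] Pcar[of h] unfolding carrier_mat_def by auto
  have Fmult: "(F * X) $$ (k, l) = (W k * X) $$ (i, l)" if "X \<in> carrier_mat n m" "k < 3" "l < m" for X m k l
    using that i by (simp add: F_def scalar_prod_def row_def col_def Wd)
  define Vb where "Vb g h = mat 3 3 (\<lambda>(k, k'). if grade67 k = g then Tab \<epsilon> h k k' else 0)" for g h
  have FV: "Vb g h * F = F * (Pg g * A h)" for g h
  proof (rule eq_matI)
    fix k l assume kl: "k < dim_row (F * (Pg g * A h))" "l < dim_col (F * (Pg g * A h))"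
    then have k: "k < 3" and l: "l < n" by (auto simp: F_def)
    have "(Vb g h * F) $$ (k, l) = (\<Sum>k'<3. (if grade67 k = g then Tab \<epsilon> h k k' else 0) * W k' $$ (i, l))"
      using k l by (simp add: Vb_def F_def scalar_prod_def row_def col_def atLeast0LessThan)
    also have "\<dots> = (if grade67 k = g then \<epsilon> ^ sexp h * W (act67 k h) $$ (i, l) else 0)"
      using sum_Tab1[OF k, of \<epsilon> h "\<lambda>k'. W k' $$ (i, l)"] by auto
    also have "\<dots> = ((W k * Pg g) * A h) $$ (i, l)"
    proof -
      have "(W k * Pg g) * A h = (if grade67 k = g then \<epsilon> ^ sexp h \<cdot>\<^sub>m W (act67 k h) else 0\<^sub>m n n)"
        using WP[OF k, of g] WA[OF k, of h] by simp
      then show ?thesis using i l by simp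
    qed
    also have "\<dots> = (F * (Pg g * A h)) $$ (k, l)"
      using k l by (subst Fmult[of "Pg g * A h" n]) (simp_all add: ma)
    finally show "(Vb g h * F) $$ (k, l) = (F * (Pg g * A h)) $$ (k, l)" .
  qed (auto simp: Vb_def)
  have wnz: "w $$ (i, j) \<noteq> 0" using nz by (simp add: w_def)
  define C where "C = mat n n (\<lambda>(r, s). if r = j \<and> s = i then 1 / w $$ (i, j) else 0)"
  have C[simp]: "C \<in> carrier_mat n n" by (simp add: C_def)
  have wC: "(w * C) $$ (i, i) = 1"
  proof -
    have "(w * C) $$ (i, i) = (\<Sum>r\<in>{0..<n}. w $$ (i, r) * (if r = j then 1 / w $$ (i, j) else 0))"
      using i j w by (simp add: C_def scalar_prod_def row_def col_def)
    also have "\<dots> = 1" using j wnz by (simp add: if_distrib[of "\<lambda>x. _ * x"] sum.delta' cong: if_cong)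
    finally show ?thesis .
  qed
  define Q where "Q = (1/2) \<cdot>\<^sub>m (Ps * C + \<epsilon> \<cdot>\<^sub>m (A S * (Ps * C)))"
  have Q[simp]: "Q \<in> carrier_mat n n" by (simp add: Q_def)
  have QAS: "A S * Q = \<epsilon> \<cdot>\<^sub>m Q"
  proof -
    have "A S * Q = (1/2) \<cdot>\<^sub>m (A S * (Ps * C) + \<epsilon> \<cdot>\<^sub>m (Ps * C))"
      by (simp add: Q_def sr dr ASAS)
    also have "\<dots> = \<epsilon> \<cdot>\<^sub>m Q"
      using e2 unfolding Q_def
      by (auto simp: add_smult_distrib_left_mat[of _ n n] smult_smult_assoc comm_add_mat[of _ n n] mult.commute)
    finally show ?thesis .
  qed
  have QPs: "Ps * Q = Q"
  proof -
    have "Ps * Q = (1/2) \<cdot>\<^sub>m (Ps * (Ps * C) + \<epsilon> \<cdot>\<^sub>m (Ps * (A S * (Ps * C))))"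
      by (simp add: Q_def sr dr)
    also have "Ps * (Ps * C) = Ps * C" by (simp add: Ps_def PP')
    also have "Ps * (A S * (Ps * C)) = A S * (Ps * C)"
      by (simp add: Ps_def ASPs'[symmetric] PP')
    finally show ?thesis by (simp add: Q_def)
  qed
  have PQ: "Pg x * Q = (if x = S then Q else 0\<^sub>m n n)" for x
  proof -
    have "Pg x * Q = Pg x * (Ps * Q)" using QPs by simp
    then show ?thesis using QPs by (auto simp: Ps_def PP')
  qed
  have wQ: "(w * Q) $$ (i, i) = 1"
  proof -
    have h1: "w * (Ps * C) = w * C" by (simp add: ma[symmetric] wPs)
    have h2: "w * (A S * (Ps * C)) = \<epsilon> \<cdot>\<^sub>m (w * C)"
    proof -
      have "w * (A S * (Ps * C)) = (w * A S) * (Ps * C)" by (simp add: ma)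
      also have "\<dots> = \<epsilon> \<cdot>\<^sub>m (w * C)" by (simp add: wAS sl h1)
      finally show ?thesis .
    qed
    have "w * Q = (1/2) \<cdot>\<^sub>m (w * (Ps * C) + \<epsilon> \<cdot>\<^sub>m (w * (A S * (Ps * C))))"
      by (simp add: Q_def sr dr)
    also have "\<dots> = (1/2) \<cdot>\<^sub>m (w * C + \<epsilon> \<cdot>\<^sub>m (\<epsilon> \<cdot>\<^sub>m (w * C)))"
      by (simp add: h1 h2)
    finally have "(w * Q) $$ (i, i) = (1/2) * ((w * C) $$ (i, i) + \<epsilon> * (\<epsilon> * (w * C) $$ (i, i)))"
      using i by simp
    then show ?thesis using wC e2 by (simp add: mult.assoc[symmetric])
  qed
  have Qsg: "A (sg h) * Q = \<epsilon> ^ sexp h \<cdot>\<^sub>m Q" for h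
    using sexp01[of h] by (auto simp: sg_def QAS A1)
  define Q' where "Q' k = A (s3_inv (hk k)) * Q" for k
  have Q'[simp]: "Q' k \<in> carrier_mat n n" for k by (simp add: Q'_def)
  have Q'P: "Pg g * Q' k = (if grade67 k = g then Q' k else 0\<^sub>m n n)" if k: "k < 3" for k g
  proof -
    have "Pg g * A (s3_inv (hk k)) = A (s3_inv (hk k)) * Pg (s3_mult (s3_mult (hk k) g) (s3_inv (hk k)))"
      using AP[of "s3_inv (hk k)" "s3_mult (s3_mult (hk k) g) (s3_inv (hk k))"] by (simp only: grpid)
    then have "Pg g * Q' k = A (s3_inv (hk k)) * (Pg (s3_mult (s3_mult (hk k) g) (s3_inv (hk k))) * Q)"
      by (simp add: Q'_def ma[symmetric])
    then show ?thesis by (simp add: PQ T1[OF k] Q'_def)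
  qed
  have Q'A: "A h * Q' k = \<epsilon> ^ sexp h \<cdot>\<^sub>m Q' (act67 k (s3_inv h))" if k: "k < 3" for k h
  proof -
    have "A h * Q' k = A (s3_mult (s3_inv (hk (act67 k (s3_inv h)))) (sg h)) * Q"
      by (simp add: Q'_def AA' T3[OF k])
    also have "\<dots> = A (s3_inv (hk (act67 k (s3_inv h)))) * (A (sg h) * Q)"
      by (simp add: AA')
    also have "\<dots> = \<epsilon> ^ sexp h \<cdot>\<^sub>m Q' (act67 k (s3_inv h))"
      by (simp add: Qsg sr Q'_def)
    finally show ?thesis .
  qed
  define P where "P = mat n 3 (\<lambda>(r, k). Q' k $$ (r, i))"
  have P[simp]: "P \<in> carrier_mat n 3" by (simp add: P_def)
  have Pd[simp]: "dim_row P = n" "dim_col P = 3" by (simp_all add: P_def)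
  have Pmult: "(X * P) $$ (r, k) = (X * Q' k) $$ (r, i)" if "X \<in> carrier_mat m n" "r < m" "k < 3" for X m r k
    using that i by (simp add: P_def scalar_prod_def row_def col_def)
  have PV: "Pg g * A h * P = P * Vb g h" for g h
  proof (rule eq_matI)
    fix r k assume rk: "r < dim_row (P * Vb g h)" "k < dim_col (P * Vb g h)"
    then have r: "r < n" and k: "k < 3" by (auto simp: Vb_def)
    have "(Pg g * A h * P) $$ (r, k) = (Pg g * (A h * Q' k)) $$ (r, i)"
      using r k by (subst Pmult[of _ n]) (simp_all add: ma)
    also have "Pg g * (A h * Q' k) = \<epsilon> ^ sexp h \<cdot>\<^sub>m (Pg g * Q' (act67 k (s3_inv h)))"
      by (simp add: Q'A[OF k] sr)
    also have "\<dots> = (if grade67 (act67 k (s3_inv h)) = g then \<epsilon> ^ sexp h \<cdot>\<^sub>m Q' (act67 k (s3_inv h)) else 0\<^sub>m n n)"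
      using Q'P[OF act67_lt[OF k], of g] by simp
    also have "\<dots> $$ (r, i) = (if grade67 (act67 k (s3_inv h)) = g then \<epsilon> ^ sexp h * Q' (act67 k (s3_inv h)) $$ (r, i) else 0)"
      using r i by simp
    also have "\<dots> = (\<Sum>k'<3. Q' k' $$ (r, i) * (if grade67 k' = g then Tab \<epsilon> h k' k else 0))"
      using sum_Tab2[OF k, of "\<lambda>k'. Q' k' $$ (r, i)" g \<epsilon> h] by simp
    also have "\<dots> = (P * Vb g h) $$ (r, k)"
      using r k by (simp add: Vb_def P_def scalar_prod_def row_def col_def atLeast0LessThan)
    finally show "(Pg g * A h * P) $$ (r, k) = (P * Vb g h) $$ (r, k)" .
  qed (auto simp: Vb_def)
  have FP: "F * P = 1\<^sub>m 3"
  proof (rule eq_matI)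
    fix k k' assume kk: "k < dim_row (1\<^sub>m 3 :: complex mat)" "k' < dim_col (1\<^sub>m 3 :: complex mat)"
    then have k: "k < 3" and k': "k' < 3" by auto
    have "(F * P) $$ (k, k') = (W k * Q' k') $$ (i, i)"
    proof -
      have "(F * P) $$ (k, k') = (W k * P) $$ (i, k')" using Fmult[OF P k k'] .
      also have "\<dots> = (W k * Q' k') $$ (i, i)" using Pmult[OF W i k'] .
      finally show ?thesis .
    qed
    also have "W k * Q' k' = w * (A (s3_mult (hk k) (s3_inv (hk k'))) * Q)"
      by (simp add: W_def Q'_def ma AA')
    also have "\<dots> = (if k = k' then w * Q else 0\<^sub>m n n)"
    proof (cases "k = k'")
      case True then show ?thesis by (simp add: A1)
    next
      case False
      define x where "x = s3_mult (hk k) (s3_inv (hk k'))"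
      have "w * (A x * Q) = w * (A x * (Ps * Q))" using QPs by simp
      also have "\<dots> = (w * Pg (s3_mult (s3_mult x S) (s3_inv x))) * (A x * Q)"
        by (simp add: Ps_def AP' ma)
      also have "\<dots> = 0\<^sub>m n n" using T5[OF k k' False] by (simp add: wP x_def)
      finally show ?thesis using False by (simp add: x_def)
    qed
    also have "\<dots> $$ (i, i) = 1\<^sub>m 3 $$ (k, k')"
      using wQ i k k' by simp
    finally show "(F * P) $$ (k, k') = 1\<^sub>m 3 $$ (k, k')" .
  qed auto
  show ?thesis
    using F P FV PV FP unfolding Vb_def by blast
qed

end

context srep begin

lemma forward:
  assumes NZ: "Pg S \<noteq> 0\<^sub>m n n"
  shows "\<exists>\<epsilon>. (\<epsilon> = 1 \<or> \<epsilon> = -1) \<and> (\<exists>F P. F \<in> carrier_mat 3 n \<and> P \<in> carrier_mat n 3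
     \<and> (\<forall>g h. mat 3 3 (\<lambda>(k, k'). if grade67 k = g then Tab \<epsilon> h k k' else 0) * F = F * (Pg g * A h))
     \<and> (\<forall>g h. Pg g * A h * P = P * mat 3 3 (\<lambda>(k, k'). if grade67 k = g then Tab \<epsilon> h k k' else 0))
     \<and> F * P = 1\<^sub>m 3)"
proof -
  obtain i j where i: "i < n" and j: "j < n" and ij: "Pg S $$ (i, j) \<noteq> 0"
  proof (rule ccontr)
    assume "\<not> thesis"
    with that have "\<And>i j. i < n \<Longrightarrow> j < n \<Longrightarrow> Pg S $$ (i, j) = 0" by blast
    then have "Pg S = 0\<^sub>m n n" by (intro eq_matI) auto
    with NZ show False by simp
  qed
  define Ei where "Ei = mat n n (\<lambda>(r, s). if r = i \<and> s = i then (1::complex) else 0)"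
  have Ei[simp]: "Ei \<in> carrier_mat n n" by (simp add: Ei_def)
  define u0 where "u0 = Ei * Pg S"
  have u0[simp]: "u0 \<in> carrier_mat n n" by (simp add: u0_def)
  have u0Ps: "u0 * Pg S = u0" by (simp add: u0_def ma PP)
  have u0ij: "u0 $$ (i, j) = Pg S $$ (i, j)"
  proof -
    have "u0 $$ (i, j) = (\<Sum>r\<in>{0..<n}. (if r = i then 1 else 0) * Pg S $$ (r, j))"
      using i j by (simp add: u0_def Ei_def scalar_prod_def row_def col_def)
    also have "\<dots> = Pg S $$ (i, j)" using i by (simp add: if_distrib[of "\<lambda>x. x * _"] sum.delta cong: if_cong)
    finally show ?thesis .
  qed
  have "(u0 + 1 \<cdot>\<^sub>m (u0 * A S)) $$ (i, j) + (u0 + (-1) \<cdot>\<^sub>m (u0 * A S)) $$ (i, j) = 2 * u0 $$ (i, j)"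
    using i j by simp
  then obtain \<epsilon> where eps: "\<epsilon> = 1 \<or> \<epsilon> = -1" and nz: "(u0 + \<epsilon> \<cdot>\<^sub>m (u0 * A S)) $$ (i, j) \<noteq> 0"
    using ij u0ij by (metis add.right_neutral add_0 mult_eq_0_iff zero_neq_numeral)
  show ?thesis using forward_eps[OF eps u0 u0Ps i j nz] eps by blast
qed

end

lemma dS3_induct:
  assumes z: "Q (\<lambda>_. 0)" and st: "\<And>c g h b. Q b \<Longrightarrow> Q (d_add (d_scale c (basis_elt g h)) b)"
  shows "Q a"
proof -
  have "finite X \<Longrightarrow> Q (\<lambda>p. if p \<in> X then a p else 0)" for X
  proof (induction rule: finite_induct)
    case empty then show ?case using z by simp
  next
    case (insert x X)
    obtain g h where x: "x = (g, h)" by (cases x) auto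
    have "(\<lambda>p. if p \<in> insert x X then a p else 0) = d_add (d_scale (a x) (basis_elt g h)) (\<lambda>p. if p \<in> X then a p else 0)"
      using insert(2) by (auto simp: d_add_def d_scale_def basis_elt_def x)
    then show ?case using st[OF insert(3)] by simp
  qed
  from this[of UNIV] show ?thesis by simp
qed

lemma smult_zero_left: "(0::complex) \<cdot>\<^sub>m X = 0\<^sub>m (dim_row X) (dim_col X)"
  by (rule eq_matI) auto

lemma rmod_zero: assumes "rmod n act" shows "act (\<lambda>_. 0) = 0\<^sub>m n n"
proof -
  have "(\<lambda>_. 0) = d_scale 0 (\<lambda>_. 0 :: complex)" by (simp add: d_scale_def)
  then have "act (\<lambda>_. 0) = 0 \<cdot>\<^sub>m act (\<lambda>_. 0)" using assms unfolding rmod_def by metis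
  also have "\<dots> = 0\<^sub>m n n" using assms unfolding rmod_def carrier_mat_def by (simp add: smult_zero_left)
  finally show ?thesis .
qed

lemma ga_add: "graded_act m gr T (d_add a b) = graded_act m gr T a + graded_act m gr T b"
  by (rule eq_matI) (auto simp: graded_act_def d_add_def sum.distrib algebra_simps)
lemma ga_scale: "graded_act m gr T (d_scale c a) = c \<cdot>\<^sub>m graded_act m gr T a"
  by (rule eq_matI) (auto simp: graded_act_def d_scale_def sum_distrib_left algebra_simps)
lemma ga_zero: "graded_act m gr T (\<lambda>_. 0) = 0\<^sub>m m m"
  by (rule eq_matI) (auto simp: graded_act_def)
lemma ga_car: "graded_act m gr T a \<in> carrier_mat m m"
  by (simp add: graded_act_def)

lemma intertw_F:
  assumes rm: "rmod n act" and F: "F \<in> carrier_mat 3 n"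
    and bas: "\<And>g h. graded_act 3 gr T (basis_elt g h) * F = F * act (basis_elt g h)"
  shows "graded_act 3 gr T a * F = F * act a"
proof (induction a rule: dS3_induct)
  case 1 show ?case using rm F by (simp add: ga_zero rmod_zero)
next
  case (2 c g h b)
  have car: "\<And>x. act x \<in> carrier_mat n n" using rm unfolding rmod_def by blast
  have "graded_act 3 gr T (d_add (d_scale c (basis_elt g h)) b) * F
      = c \<cdot>\<^sub>m (graded_act 3 gr T (basis_elt g h) * F) + graded_act 3 gr T b * F"
  proof -
    have "(c \<cdot>\<^sub>m graded_act 3 gr T (basis_elt g h) + graded_act 3 gr T b) * F
      = (c \<cdot>\<^sub>m graded_act 3 gr T (basis_elt g h)) * F + graded_act 3 gr T b * F"
      by (rule add_mult_distrib_mat[of _ 3 3 _ F n]) (auto simp: ga_car F)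
    also have "(c \<cdot>\<^sub>m graded_act 3 gr T (basis_elt g h)) * F = c \<cdot>\<^sub>m (graded_act 3 gr T (basis_elt g h) * F)"
      by (rule mult_smult_assoc_mat[of _ 3 3 F n]) (auto simp: ga_car F)
    finally show ?thesis by (simp add: ga_add ga_scale)
  qed
  also have "\<dots> = c \<cdot>\<^sub>m (F * act (basis_elt g h)) + F * act b" using bas 2 by simp
  also have "\<dots> = F * act (d_add (d_scale c (basis_elt g h)) b)"
  proof -
    have "F * (c \<cdot>\<^sub>m act (basis_elt g h) + act b) = F * (c \<cdot>\<^sub>m act (basis_elt g h)) + F * act b"
      by (rule mult_add_distrib_mat[of F 3 n _ n]) (auto simp: car F)
    also have "F * (c \<cdot>\<^sub>m act (basis_elt g h)) = c \<cdot>\<^sub>m (F * act (basis_elt g h))"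
      by (rule mult_smult_distrib[of F 3 n _ n]) (auto simp: car F)
    finally show ?thesis using rm unfolding rmod_def by simp
  qed
  finally show ?case .
qed

lemma intertw_P:
  assumes rm: "rmod n act" and P: "P \<in> carrier_mat n 3"
    and bas: "\<And>g h. act (basis_elt g h) * P = P * graded_act 3 gr T (basis_elt g h)"
  shows "act a * P = P * graded_act 3 gr T a"
proof (induction a rule: dS3_induct)
  case 1 show ?case using rm P by (simp add: ga_zero rmod_zero)
next
  case (2 c g h b)
  have car: "\<And>x. act x \<in> carrier_mat n n" using rm unfolding rmod_def by blast
  have "act (d_add (d_scale c (basis_elt g h)) b) * P
      = c \<cdot>\<^sub>m (act (basis_elt g h) * P) + act b * P"
  proof -
    have "(c \<cdot>\<^sub>m act (basis_elt g h) + act b) * P = (c \<cdot>\<^sub>m act (basis_elt g h)) * P + act b * P"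
      by (rule add_mult_distrib_mat[of _ n n _ P 3]) (auto simp: car P)
    also have "(c \<cdot>\<^sub>m act (basis_elt g h)) * P = c \<cdot>\<^sub>m (act (basis_elt g h) * P)"
      by (rule mult_smult_assoc_mat[of _ n n P 3]) (auto simp: car P)
    finally show ?thesis using rm unfolding rmod_def by simp
  qed
  also have "\<dots> = c \<cdot>\<^sub>m (P * graded_act 3 gr T (basis_elt g h)) + P * graded_act 3 gr T b" using bas 2 by simp
  also have "\<dots> = P * graded_act 3 gr T (d_add (d_scale c (basis_elt g h)) b)"
  proof -
    have "P * (c \<cdot>\<^sub>m graded_act 3 gr T (basis_elt g h) + graded_act 3 gr T b)
       = P * (c \<cdot>\<^sub>m graded_act 3 gr T (basis_elt g h)) + P * graded_act 3 gr T b"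
      by (rule mult_add_distrib_mat[of P n 3 _ 3]) (auto simp: ga_car P)
    also have "P * (c \<cdot>\<^sub>m graded_act 3 gr T (basis_elt g h)) = c \<cdot>\<^sub>m (P * graded_act 3 gr T (basis_elt g h))"
      by (rule mult_smult_distrib[of P n 3 _ 3]) (auto simp: ga_car P)
    finally show ?thesis by (simp add: ga_add ga_scale)
  qed
  finally show ?case .
qed

context srep begin
lemma Pconj: "Pg (s3_mult (s3_mult h g) (s3_inv h)) = A h * Pg g * A (s3_inv h)"
proof -
  have "A h * Pg g * A (s3_inv h) = Pg (s3_mult (s3_mult h g) (s3_inv h)) * (A h * A (s3_inv h))"
    by (simp add: AP ma)
  then show ?thesis by (simp add: AA A1)
qed
end

lemma Vb_basis: assumes "\<And>a k k'. k < 3 \<Longrightarrow> k' < 3 \<Longrightarrow> V a $$ (k, k') = (\<Sum>h\<in>UNIV. a (grade67 k, h) * Tab \<epsilon> h k k')"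
  and "\<And>a. V a \<in> carrier_mat 3 3"
  shows "V (basis_elt g h) = mat 3 3 (\<lambda>(k, k'). if grade67 k = g then Tab \<epsilon> h k k' else 0)"
proof (rule eq_matI)
  fix k k' assume "k < dim_row (mat 3 3 (\<lambda>(k, k'). if grade67 k = g then Tab \<epsilon> h k k' else 0))"
    "k' < dim_col (mat 3 3 (\<lambda>(k, k'). if grade67 k = g then Tab \<epsilon> h k k' else 0))"
  then have k: "k < 3" "k' < 3" by auto
  have "V (basis_elt g h) $$ (k, k') = (\<Sum>h'\<in>UNIV. (if h' = h then (if grade67 k = g then 1 else 0) else 0) * Tab \<epsilon> h' k k')"
    using assms(1)[OF k] by (auto simp: basis_elt_def intro!: sum.cong)
  also have "\<dots> = (if grade67 k = g then Tab \<epsilon> h k k' else 0)"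
    by (simp add: if_distrib[of "\<lambda>x. x * _"] sum.delta cong: if_cong)
  finally show "V (basis_elt g h) $$ (k, k') = mat 3 3 (\<lambda>(k, k'). if grade67 k = g then Tab \<epsilon> h k k' else 0) $$ (k, k')"
    using k by simp
qed (use assms(2) in auto)

lemma rmod_srep: assumes rm: "rmod n act"
  shows "srep n (\<lambda>h. act (grp h)) (\<lambda>g. act (basis_elt g E))"
proof -
  have car: "\<And>x. act x \<in> carrier_mat n n" and mul: "\<And>a b. act (d_mult a b) = act a * act b"
    and un: "act d_unit = 1\<^sub>m n" using rm unfolding rmod_def by auto
  show ?thesis
  proof
    show "act (grp h) * act (grp k) = act (grp (s3_mult h k))" for h k by (simp add: mul[symmetric] r1)
    show "act (grp E) = 1\<^sub>m n" using un by (simp add: r5)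
    show "act (basis_elt g E) * act (basis_elt g' E) = (if g = g' then act (basis_elt g E) else 0\<^sub>m n n)" for g g'
      by (simp add: mul[symmetric] r2 rmod_zero[OF rm])
    show "act (grp h) * act (basis_elt g E) = act (basis_elt (s3_mult (s3_mult h g) (s3_inv h)) E) * act (grp h)" for h g
      by (simp add: mul[symmetric] r3)
  qed (auto simp: car)
qed

lemma forward_main:
  assumes rm: "rmod n act" and inf: "inner_faithful n act"
  shows "iso_to_summand 3 V6 n act \<or> iso_to_summand 3 V7 n act"
proof -
  interpret srep n "\<lambda>h. act (grp h)" "\<lambda>g. act (basis_elt g E)" by (rule rmod_srep[OF rm])
  have car: "\<And>x. act x \<in> carrier_mat n n" and mul: "\<And>a b. act (d_mult a b) = act a * act b"
    and add: "\<And>a b. act (d_add a b) = act a + act b" using rm unfolding rmod_def by auto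
  have basis: "act (basis_elt g h) = act (basis_elt g E) * act (grp h)" for g h
    by (simp add: mul[symmetric] r4)
  have NZ: "act (basis_elt S E) \<noteq> 0\<^sub>m n n"
  proof
    assume z: "act (basis_elt S E) = 0\<^sub>m n n"
    have zSR: "act (basis_elt SR E) = 0\<^sub>m n n"
      using Pconj[of R S] z by simp
    have zSR2: "act (basis_elt SR2 E) = 0\<^sub>m n n"
      using Pconj[of R2 S] z by simp
    have eo: "act eodd = 0\<^sub>m n n" unfolding eodd_def by (simp add: add z zSR zSR2)
    obtain a where a: "a \<in> I0" and na: "act a \<noteq> 0\<^sub>m n n"
      using inf I0_hopf I0_ne unfolding inner_faithful_def by blast
    have "act a = act eodd * act a" using r6[OF a] mul by metis
    also have "\<dots> = 0\<^sub>m n n" using eo car[of a] by simp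
    finally show False using na by simp
  qed
  obtain \<epsilon> F P where eps: "\<epsilon> = 1 \<or> \<epsilon> = -1" and F: "F \<in> carrier_mat 3 n" and P: "P \<in> carrier_mat n 3"
    and FV: "\<forall>g h. mat 3 3 (\<lambda>(k, k'). if grade67 k = g then Tab \<epsilon> h k k' else 0) * F = F * (act (basis_elt g E) * act (grp h))"
    and PV: "\<forall>g h. act (basis_elt g E) * act (grp h) * P = P * mat 3 3 (\<lambda>(k, k'). if grade67 k = g then Tab \<epsilon> h k k' else 0)"
    and FP: "F * P = 1\<^sub>m 3"
    using forward[OF NZ] by blast
  from eps show ?thesis
  proof
    assume e: "\<epsilon> = 1"
    have vb: "V6 (basis_elt g h) = mat 3 3 (\<lambda>(k, k'). if grade67 k = g then Tab \<epsilon> h k k' else 0)" for g h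
      unfolding e by (rule Vb_basis) (auto simp: V6_entry V6_car)
    have bF: "V6 (basis_elt g h) * F = F * act (basis_elt g h)" for g h
      unfolding vb basis[of g h] by (rule FV[rule_format])
    have bP: "act (basis_elt g h) * P = P * V6 (basis_elt g h)" for g h
      unfolding vb basis[of g h] by (rule PV[rule_format])
    have "V6 a * F = F * act a" for a
      unfolding V6_def by (rule intertw_F[OF rm F bF[unfolded V6_def]])
    moreover have "act a * P = P * V6 a" for a
      unfolding V6_def by (rule intertw_P[OF rm P bP[unfolded V6_def]])
    ultimately have "iso_to_summand 3 V6 n act" unfolding iso_to_summand_def using F P FP by blast
    then show ?thesis by blast
  next
    assume e: "\<epsilon> = -1"
    have vb: "V7 (basis_elt g h) = mat 3 3 (\<lambda>(k, k'). if grade67 k = g then Tab \<epsilon> h k k' else 0)" for g h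
      unfolding e by (rule Vb_basis) (auto simp: V7_entry V7_car)
    have bF: "V7 (basis_elt g h) * F = F * act (basis_elt g h)" for g h
      unfolding vb basis[of g h] by (rule FV[rule_format])
    have bP: "act (basis_elt g h) * P = P * V7 (basis_elt g h)" for g h
      unfolding vb basis[of g h] by (rule PV[rule_format])
    have "V7 a * F = F * act a" for a
      unfolding V7_def by (rule intertw_F[OF rm F bF[unfolded V7_def]])
    moreover have "act a * P = P * V7 a" for a
      unfolding V7_def by (rule intertw_P[OF rm P bP[unfolded V7_def]])
    ultimately have "iso_to_summand 3 V7 n act" unfolding iso_to_summand_def using F P FP by blast
    then show ?thesis by blast
  qed
qed

theorem mainTheorem17:
  fixes n :: nat and act :: "dS3 \<Rightarrow> complex mat"
  assumes "rmod n act"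
  shows "inner_faithful n act \<longleftrightarrow> (iso_to_summand 3 V6 n act \<or> iso_to_summand 3 V7 n act)"
proof
  assume "inner_faithful n act"
  then show "iso_to_summand 3 V6 n act \<or> iso_to_summand 3 V7 n act"
    using forward_main[OF assms] by blast
next
  assume "iso_to_summand 3 V6 n act \<or> iso_to_summand 3 V7 n act"
  then show "inner_faithful n act"
  proof
    assume iso6: "iso_to_summand 3 V6 n act"
    have e: "(1::complex) \<noteq> 0" by simp
    show ?thesis by (rule backward_gen[OF V6_car V6_entry e iso6])
  next
    assume iso7: "iso_to_summand 3 V7 n act"
    have e: "(-1::complex) \<noteq> 0" by simp
    show ?thesis by (rule backward_gen[OF V7_car V7_entry e iso7])
  qed
qed

end
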